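(* Let $\mathfrak a$ be an $n$-dimensional real Euclidean vector space, $\Delta\subset\mathfrak a^*$ a reduced root system (i.e. $2\alpha\notin\Delta$ for $\alpha\in\Delta$) with positive system $\Delta^+$, and $m$ a Weyl-group-invariant multiplicity function on $\Delta$ with $m_\alpha\in2\mathbb N$ for all $\alpha\in\Delta$. With the notation $\lambda_\alpha$, $\rho$, $P^+$, $\mathbf c(m,\lambda)$ and $d(m,\mu)$ explained in the context, the following hold: (1) For all $\mu\in P^+$, $$d(m,\mu)=\frac{\mathbf c(m,-\rho)}{\mathbf c(m,\mu+\rho)\,\mathbf c(m,-(\mu+\rho))}.$$ (2) The function $\mu\mapsto d(m,\mu)$ on $P^+$ extends to a polynomial function on $\mathfrak a^*_{\mathbb C}$, namely $$d(m,\lambda)=\prod_{\alpha\in\Delta^+}\prod_{k=0}^{m_\alpha/2-1}\frac{k^2-(\lambda+\rho)_\alpha^2}{k^2-\rho_\alpha^2}.$$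
   Context: The inner product $\langle\cdot,\cdot\rangle$ of $\mathfrak a$ is transferred to $\mathfrak a^*$ and extended complex-bilinearly to $\mathfrak a^*_{\mathbb C}$. For $\lambda\in\mathfrak a^*_{\mathbb C}$ and $\alpha\in\Delta$ put $\lambda_\alpha:=\langle\lambda,\alpha\rangle/\langle\alpha,\alpha\rangle$. Let $\rho:=\frac12\sum_{\alpha\in\Delta^+}m_\alpha\alpha$ and $P^+:=\{\mu\in\mathfrak a^*:\mu_\alpha\in\mathbb Z_{\ge0}\text{ for all }\alpha\in\Delta^+\}$. The $\mathbf c$-function is $$\mathbf c(m,\lambda):=\Big(C\prod_{\alpha\in\Delta^+}\prod_{k=0}^{m_\alpha/2-1}(\lambda_\alpha+k)\Big)^{-1},\qquad C:=\prod_{\alpha\in\Delta^+}\prod_{k=0}^{m_\alpha/2-1}\frac1{\rho_\alpha+k},$$ a meromorphic function of $\lambda\in\mathfrak a^*_{\mathbb C}$. The Plancherel density is defined for $\mu\in P^+$ by Vretare's formula $$d(m,\mu):=\lim_{\varepsilon\to0}\frac{\mathbf c(m,-\rho+\varepsilon)}{\mathbf c(m,\mu+\rho)\,\mathbf c(m,-\mu-\rho+\varepsilon)},$$ with $\varepsilon\in\mathfrak a^*_{\mathbb C}$ tending to $0$. *)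

theory Defs
  imports "HOL-Analysis.Analysis"
begin

text \<open>The Euclidean space \<a> (identified with its dual via the inner product) is
  modelled as real^'n; its complexification \<a>*_C as complex^'n, with the
  inner product extended complex-bilinearly.\<close>

definition cvec :: "real^'n \<Rightarrow> complex^'n" where
  "cvec v = (\<chi> i. complex_of_real (v $ i))"

definition cinner :: "complex^'n \<Rightarrow> real^'n \<Rightarrow> complex" where
  "cinner l a = (\<Sum>i\<in>UNIV. l $ i * complex_of_real (a $ i))"

definition coroot_coord :: "complex^'n \<Rightarrow> real^'n \<Rightarrow> complex" where
  "coroot_coord l a = cinner l a / complex_of_real (a \<bullet> a)"

definition root_system :: "(real^'n) set \<Rightarrow> bool" where
  "root_system R \<longleftrightarrow> finite R \<and> 0 \<notin> R \<and> span R = UNIV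
     \<and> (\<forall>a\<in>R. \<forall>b\<in>R. b - (2 * (b \<bullet> a) / (a \<bullet> a)) *\<^sub>R a \<in> R)
     \<and> (\<forall>a\<in>R. \<forall>b\<in>R. 2 * (b \<bullet> a) / (a \<bullet> a) \<in> \<int>)"

definition reduced_root_system :: "(real^'n) set \<Rightarrow> bool" where
  "reduced_root_system R \<longleftrightarrow> root_system R \<and> (\<forall>a\<in>R. 2 *\<^sub>R a \<notin> R)"

definition positive_system :: "(real^'n) set \<Rightarrow> (real^'n) set \<Rightarrow> bool" where
  "positive_system R Rp \<longleftrightarrow>
     (\<exists>\<xi>. (\<forall>a\<in>R. a \<bullet> \<xi> \<noteq> 0) \<and> Rp = {a\<in>R. a \<bullet> \<xi> > 0})"

definition reflection :: "real^'n \<Rightarrow> real^'n \<Rightarrow> real^'n" where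
  "reflection a x = x - (2 * (x \<bullet> a) / (a \<bullet> a)) *\<^sub>R a"

inductive_set weyl_group :: "(real^'n) set \<Rightarrow> (real^'n \<Rightarrow> real^'n) set"
  for R :: "(real^'n) set" where
  id_in: "id \<in> weyl_group R"
| refl_comp: "w \<in> weyl_group R \<Longrightarrow> a \<in> R \<Longrightarrow> reflection a \<circ> w \<in> weyl_group R"

definition weyl_invariant :: "(real^'n) set \<Rightarrow> (real^'n \<Rightarrow> nat) \<Rightarrow> bool" where
  "weyl_invariant R m \<longleftrightarrow> (\<forall>w\<in>weyl_group R. \<forall>a\<in>R. m (w a) = m a)"

definition rho :: "(real^'n) set \<Rightarrow> (real^'n \<Rightarrow> nat) \<Rightarrow> real^'n" where
  "rho Rp m = (1/2) *\<^sub>R (\<Sum>a\<in>Rp. real (m a) *\<^sub>R a)"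

definition Pplus :: "(real^'n) set \<Rightarrow> (real^'n) set" where
  "Pplus Rp = {\<mu>. \<forall>a\<in>Rp. \<exists>k::nat. (\<mu> \<bullet> a) / (a \<bullet> a) = real k}"

definition cprod :: "(real^'n) set \<Rightarrow> (real^'n \<Rightarrow> nat) \<Rightarrow> complex^'n \<Rightarrow> complex" where
  "cprod Rp m l = (\<Prod>a\<in>Rp. \<Prod>k<m a div 2. coroot_coord l a + of_nat k)"

definition cconst :: "(real^'n) set \<Rightarrow> (real^'n \<Rightarrow> nat) \<Rightarrow> complex" where
  "cconst Rp m = (\<Prod>a\<in>Rp. \<Prod>k<m a div 2.
      1 / (coroot_coord (cvec (rho Rp m)) a + of_nat k))"

text \<open>The c-function (meromorphic; at its poles Isabelle's inverse gives 0,
  but these points are excluded in the limit defining d).\<close>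
definition cfun :: "(real^'n) set \<Rightarrow> (real^'n \<Rightarrow> nat) \<Rightarrow> complex^'n \<Rightarrow> complex" where
  "cfun Rp m l = inverse (cconst Rp m * cprod Rp m l)"

text \<open>Vretare's formula: limit as epsilon \<rightarrow> 0 in \<a>*_C, taken (as for meromorphic
  functions) over epsilon avoiding the poles of the c-functions involved.\<close>
definition plancherel :: "(real^'n) set \<Rightarrow> (real^'n \<Rightarrow> nat) \<Rightarrow> real^'n \<Rightarrow> complex" where
  "plancherel Rp m \<mu> =
     Lim (at 0 within {\<epsilon>. cprod Rp m (cvec (- rho Rp m) + \<epsilon>) \<noteq> 0
                          \<and> cprod Rp m (cvec (- \<mu> - rho Rp m) + \<epsilon>) \<noteq> 0})
       (\<lambda>\<epsilon>. cfun Rp m (cvec (- rho Rp m) + \<epsilon>) /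
             (cfun Rp m (cvec (\<mu> + rho Rp m)) * cfun Rp m (cvec (- \<mu> - rho Rp m) + \<epsilon>)))"

definition dpoly :: "(real^'n) set \<Rightarrow> (real^'n \<Rightarrow> nat) \<Rightarrow> complex^'n \<Rightarrow> complex" where
  "dpoly Rp m l = (\<Prod>a\<in>Rp. \<Prod>k<m a div 2.
      (of_nat k ^ 2 - (coroot_coord (l + cvec (rho Rp m)) a) ^ 2) /
      (of_nat k ^ 2 - (coroot_coord (cvec (rho Rp m)) a) ^ 2))"

end

theory Submission imports Defs begin

lemma cc_cvec: "coroot_coord (cvec v) a = complex_of_real (v \<bullet> a / (a \<bullet> a))"
  unfolding coroot_coord_def cinner_def cvec_def inner_vec_def by simp

lemma cvec_add: "cvec (x + y) = cvec x + cvec y"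
  unfolding cvec_def by (simp add: vec_eq_iff)

lemma cvec_minus: "cvec (- x) = - cvec x"
  unfolding cvec_def by (simp add: vec_eq_iff)

lemma cprod_cvec: "cprod Rp m (cvec v) =
   (\<Prod>a\<in>Rp. \<Prod>k<m a div 2. complex_of_real (v \<bullet> a / (a \<bullet> a) + real k))"
  unfolding cprod_def cc_cvec by simp

lemma cont_cprod: "continuous_on UNIV (\<lambda>e. cprod Rp m (c + e))"
  unfolding cprod_def coroot_coord_def cinner_def divide_inverse by (intro continuous_intros)

lemma rho_ge:
  assumes fin: "finite Rp" and Rp: "Rp = {a\<in>R. a \<bullet> \<xi> > 0}"
    and refl: "\<forall>a\<in>R. \<forall>b\<in>R. b - (2 * (b \<bullet> a) / (a \<bullet> a)) *\<^sub>R a \<in> R"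
    and wi: "weyl_invariant R m" and al: "\<alpha> \<in> Rp"
  shows "real (m \<alpha>) / 2 \<le> rho Rp m \<bullet> \<alpha> / (\<alpha> \<bullet> \<alpha>)"
proof -
  define s where "s = reflection \<alpha>"
  have alR: "\<alpha> \<in> R" and axi: "\<alpha> \<bullet> \<xi> > 0" using al Rp by auto
  hence "\<alpha> \<noteq> 0" by auto
  hence aa: "\<alpha> \<bullet> \<alpha> > 0" by simp
  have sR: "s b \<in> R" if "b \<in> R" for b using refl alR that unfolding s_def reflection_def by blast
  have ms: "m (s b) = m b" if "b \<in> R" for b
  proof -
    have "reflection \<alpha> \<circ> id \<in> weyl_group R" by (rule weyl_group.refl_comp[OF weyl_group.id_in alR])
    thus ?thesis using wi that unfolding weyl_invariant_def s_def by fastforce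
  qed
  have ss: "s (s b) = b" for b unfolding s_def reflection_def using aa
    by (simp add: inner_diff_left algebra_simps)
  have sa: "s b \<bullet> \<alpha> = - (b \<bullet> \<alpha>)" for b unfolding s_def reflection_def using aa
    by (simp add: inner_diff_left algebra_simps)
  define h where "h b = real (m b) * (b \<bullet> \<alpha>)" for b
  define A where "A = {b\<in>Rp. s b \<in> Rp}"
  define B where "B = Rp - A"
  have "bij_betw s A A" unfolding A_def
    by (rule bij_betw_byWitness[where f'=s]) (auto simp: ss)
  hence "sum h A = sum (\<lambda>x. h (s x)) A" by (rule sum.reindex_bij_betw[symmetric])
  also have "\<dots> = - sum h A" unfolding sum_negf[symmetric]
    by (rule sum.cong) (auto simp: h_def A_def ms sa Rp)
  finally have A0: "sum h A = 0" by simp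
  have Bnn: "h b \<ge> 0" if "b \<in> B" for b
  proof -
    have bR: "b \<in> R" and bxi: "b \<bullet> \<xi> > 0" and nb: "s b \<notin> Rp" using that Rp unfolding B_def A_def by auto
    have "s b \<bullet> \<xi> \<le> 0" using nb sR[OF bR] Rp by auto
    hence "b \<bullet> \<xi> - (2 * (b \<bullet> \<alpha>) / (\<alpha> \<bullet> \<alpha>)) * (\<alpha> \<bullet> \<xi>) \<le> 0"
      unfolding s_def reflection_def by (simp add: inner_diff_left)
    hence "(2 * (b \<bullet> \<alpha>) / (\<alpha> \<bullet> \<alpha>)) * (\<alpha> \<bullet> \<xi>) > 0" using bxi by linarith
    hence "2 * (b \<bullet> \<alpha>) / (\<alpha> \<bullet> \<alpha>) > 0" using axi by (rule zero_less_mult_pos2)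
    hence "b \<bullet> \<alpha> > 0" using aa by (simp add: zero_less_divide_iff)
    thus ?thesis unfolding h_def by simp
  qed
  have aB: "\<alpha> \<in> B"
  proof -
    have "s \<alpha> = - \<alpha>" unfolding s_def reflection_def using aa by (simp add: algebra_simps scaleR_2)
    thus ?thesis using al axi Rp unfolding B_def A_def by auto
  qed
  have finB: "finite B" using fin unfolding B_def by simp
  have "A \<subseteq> Rp" unfolding A_def by blast
  from sum.subset_diff[OF this fin, of h]
  have "sum h Rp = sum h A + sum h B" unfolding B_def by simp
  hence "sum h Rp = sum h B" using A0 by simp
  moreover have "h \<alpha> \<le> sum h B" by (rule member_le_sum[OF aB Bnn finB]) auto
  ultimately have "real (m \<alpha>) * (\<alpha> \<bullet> \<alpha>) \<le> sum h Rp" unfolding h_def by simp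
  moreover have "rho Rp m \<bullet> \<alpha> = sum h Rp / 2" unfolding rho_def h_def
    by (simp add: inner_sum_left)
  ultimately show ?thesis using aa by (simp add: field_simps)
qed


lemma alg:
  fixes x y :: "'a \<Rightarrow> complex" and n :: "'a \<Rightarrow> nat"
  assumes "\<And>a k. a \<in> A \<Longrightarrow> k < n a \<Longrightarrow> x a + of_nat k \<noteq> 0"
      and "\<And>a k. a \<in> A \<Longrightarrow> k < n a \<Longrightarrow> - x a + of_nat k \<noteq> 0"
  shows "(\<Prod>a\<in>A. \<Prod>k<n a. 1 / (x a + of_nat k)) * (\<Prod>a\<in>A. \<Prod>k<n a. y a + of_nat k)
     * (\<Prod>a\<in>A. \<Prod>k<n a. - y a + of_nat k) / (\<Prod>a\<in>A. \<Prod>k<n a. - x a + of_nat k)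
   = (\<Prod>a\<in>A. \<Prod>k<n a. (of_nat k ^ 2 - y a ^ 2) / (of_nat k ^ 2 - x a ^ 2))"
proof -
  have "(\<Prod>a\<in>A. \<Prod>k<n a. (of_nat k ^ 2 - y a ^ 2) / (of_nat k ^ 2 - x a ^ 2))
     = (\<Prod>a\<in>A. \<Prod>k<n a. 1 / (x a + of_nat k) * (y a + of_nat k) * (- y a + of_nat k) / (- x a + of_nat k))"
  proof (intro prod.cong refl)
    fix a k assume "a \<in> A" "k \<in> {..<n a}"
    with assms have "x a + of_nat k \<noteq> 0" "- x a + of_nat k \<noteq> 0" by auto
    thus "(of_nat k ^ 2 - y a ^ 2) / (of_nat k ^ 2 - x a ^ 2) = 1 / (x a + of_nat k) * (y a + of_nat k) * (- y a + of_nat k) / (- x a + of_nat k)"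
      by (simp add: field_simps power2_eq_square)
  qed
  thus ?thesis by (simp add: prod.distrib prod_dividef)
qed

theorem corollary1p3:
  fixes R Rp :: "(real^'n) set" and m :: "real^'n \<Rightarrow> nat"
  assumes "reduced_root_system R"
    and "positive_system R Rp"
    and "weyl_invariant R m"
    and "\<forall>a\<in>R. even (m a)"
  shows "(\<forall>\<mu>\<in>Pplus Rp. plancherel Rp m \<mu> =
            cfun Rp m (cvec (- rho Rp m)) /
            (cfun Rp m (cvec (\<mu> + rho Rp m)) * cfun Rp m (cvec (- (\<mu> + rho Rp m)))))
       \<and> (\<forall>\<mu>\<in>Pplus Rp. plancherel Rp m \<mu> = dpoly Rp m (cvec \<mu>))"
proof -
  have rs: "root_system R" using assms(1) unfolding reduced_root_system_def by simp
  hence finR: "finite R" and refl: "\<forall>a\<in>R. \<forall>b\<in>R. b - (2 * (b \<bullet> a) / (a \<bullet> a)) *\<^sub>R a \<in> R"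
    unfolding root_system_def by auto
  obtain \<xi> where Rp: "Rp = {a\<in>R. a \<bullet> \<xi> > 0}" using assms(2) unfolding positive_system_def by blast
  have fin: "finite Rp" using finR Rp by simp
  define \<rho> where "\<rho> = rho Rp m"
  define r where "r a = \<rho> \<bullet> a / (a \<bullet> a)" for a
  have aa: "a \<bullet> a > 0" if "a \<in> Rp" for a using that Rp by auto
  have rk: "real k + 1 \<le> r a" if "a \<in> Rp" "k < m a div 2" for a k
  proof -
    have "real (m a) / 2 \<le> r a" unfolding r_def \<rho>_def by (rule rho_ge[OF fin Rp refl assms(3) that(1)])
    moreover have "2 * (k + 1) \<le> m a" using that(2) by presburger
    hence "real (2 * (k + 1)) \<le> real (m a)" by (simp only: of_nat_le_iff)
    hence "2 * (real k + 1) \<le> real (m a)" by simp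
    ultimately show ?thesis by (simp add: field_simps)
  qed
  have C: "cconst Rp m = (\<Prod>a\<in>Rp. \<Prod>k<m a div 2. 1 / (complex_of_real (r a) + of_nat k))"
    unfolding cconst_def cc_cvec r_def \<rho>_def by simp
  have Cnz: "cconst Rp m \<noteq> 0" unfolding C using fin rk
    by (auto simp: prod_zero_iff) (metis add.commute add_nonneg_pos of_nat_0_le_iff of_real_add of_real_eq_0_iff of_real_of_nat_eq less_le_trans zero_less_one order_less_irrefl)
  have cpf: "cprod Rp m (cvec v) = (\<Prod>a\<in>Rp. \<Prod>k<m a div 2. complex_of_real (v \<bullet> a / (a \<bullet> a)) + of_nat k)" for v
    unfolding cprod_def cc_cvec by simp
  {
    fix \<mu> assume mu: "\<mu> \<in> Pplus Rp"
    define u where "u a = \<mu> \<bullet> a / (a \<bullet> a)" for a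
    have u0: "u a \<ge> 0" if "a \<in> Rp" for a
      using mu that unfolding Pplus_def u_def by fastforce
    have e1: "(- \<rho>) \<bullet> a / (a \<bullet> a) = - r a" for a unfolding r_def by simp
    have e2: "(\<mu> + \<rho>) \<bullet> a / (a \<bullet> a) = u a + r a" for a unfolding r_def u_def by (simp add: inner_add_left add_divide_distrib)
    have e3: "(- \<mu> - \<rho>) \<bullet> a / (a \<bullet> a) = - (u a + r a)" for a unfolding r_def u_def by (simp add: inner_diff_left diff_divide_distrib)
    have nz1: "complex_of_real (- r a) + of_nat k \<noteq> 0" if "a \<in> Rp" "k < m a div 2" for a k
    proof -
      have "- r a + real k \<noteq> 0" using rk[OF that] by linarith
      thus ?thesis by (metis of_real_add of_real_eq_0_iff of_real_of_nat_eq)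
    qed
    have nz2: "complex_of_real (- (u a + r a)) + of_nat k \<noteq> 0" if "a \<in> Rp" "k < m a div 2" for a k
    proof -
      have "- (u a + r a) + real k \<noteq> 0" using rk[OF that] u0[OF that(1)] by linarith
      thus ?thesis by (metis of_real_add of_real_eq_0_iff of_real_of_nat_eq)
    qed
    have nz3: "complex_of_real (u a + r a) + of_nat k \<noteq> 0" if "a \<in> Rp" "k < m a div 2" for a k
    proof -
      have "(u a + r a) + real k \<noteq> 0" using rk[OF that] u0[OF that(1)] by linarith
      thus ?thesis by (metis of_real_add of_real_eq_0_iff of_real_of_nat_eq)
    qed
    have nz4: "complex_of_real (r a) + of_nat k \<noteq> 0" if "a \<in> Rp" "k < m a div 2" for a k
    proof -
      have "r a + real k \<noteq> 0" using rk[OF that] by linarith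
      thus ?thesis by (metis of_real_add of_real_eq_0_iff of_real_of_nat_eq)
    qed
    have p1: "cprod Rp m (cvec (- \<rho>)) = (\<Prod>a\<in>Rp. \<Prod>k<m a div 2. complex_of_real (- r a) + of_nat k)"
      unfolding cpf e1 ..
    have p2: "cprod Rp m (cvec (\<mu> + \<rho>)) = (\<Prod>a\<in>Rp. \<Prod>k<m a div 2. complex_of_real (u a + r a) + of_nat k)"
      unfolding cpf e2 ..
    have p3: "cprod Rp m (cvec (- \<mu> - \<rho>)) = (\<Prod>a\<in>Rp. \<Prod>k<m a div 2. complex_of_real (- (u a + r a)) + of_nat k)"
      unfolding cpf e3 ..
    have P1: "cprod Rp m (cvec (- \<rho>)) \<noteq> 0" unfolding p1 using fin nz1 by (auto simp: prod_zero_iff)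
    have P2: "cprod Rp m (cvec (\<mu> + \<rho>)) \<noteq> 0" unfolding p2 using fin nz3 by (auto simp: prod_zero_iff)
    have P3: "cprod Rp m (cvec (- \<mu> - \<rho>)) \<noteq> 0" unfolding p3 using fin nz2 by (auto simp: prod_zero_iff)
    define g where "g e = cfun Rp m (cvec (- \<rho>) + e) /
             (cfun Rp m (cvec (\<mu> + \<rho>)) * cfun Rp m (cvec (- \<mu> - \<rho>) + e))" for e
    define S where "S = {e. cprod Rp m (cvec (- \<rho>) + e) \<noteq> 0 \<and> cprod Rp m (cvec (- \<mu> - \<rho>) + e) \<noteq> 0}"
    have oS: "open S" unfolding S_def Collect_conj_eq
      by (intro open_Int open_Collect_neq cont_cprod continuous_on_const)
    have S0: "0 \<in> S" unfolding S_def using P1 P3 by simp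
    have atS: "at 0 within S = at 0" using at_within_open[OF S0 oS] .
    have T: "((\<lambda>e. cprod Rp m (c + e)) \<longlongrightarrow> cprod Rp m c) (at 0)" for c
    proof -
      have "isCont (\<lambda>e. cprod Rp m (c + e)) 0"
        using cont_cprod[of Rp m c] by (simp add: continuous_on_eq_continuous_at)
      thus ?thesis by (simp add: isCont_def)
    qed
    have T0: "((\<lambda>e. cprod Rp m (cvec (- \<rho>) + e)) \<longlongrightarrow> cprod Rp m (cvec (- \<rho>))) (at 0)" by (rule T)
    have T1: "((\<lambda>e. cprod Rp m (cvec (- \<mu> - \<rho>) + e)) \<longlongrightarrow> cprod Rp m (cvec (- \<mu> - \<rho>))) (at 0)" by (rule T)
    have "(g \<longlongrightarrow> g 0) (at 0)" unfolding g_def cfun_def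
      by (intro tendsto_intros) (use Cnz P1 P2 P3 T0 T1 in auto)
    hence "plancherel Rp m \<mu> = g 0"
      unfolding plancherel_def \<rho>_def[symmetric] g_def[symmetric] S_def[symmetric] atS
      by (rule tendsto_Lim[OF trivial_limit_at])
    hence L: "plancherel Rp m \<mu> = cfun Rp m (cvec (- \<rho>)) /
            (cfun Rp m (cvec (\<mu> + \<rho>)) * cfun Rp m (cvec (- (\<mu> + \<rho>))))"
      unfolding g_def by simp
    have "cfun Rp m (cvec (- \<rho>)) / (cfun Rp m (cvec (\<mu> + \<rho>)) * cfun Rp m (cvec (- (\<mu> + \<rho>))))
      = cconst Rp m * cprod Rp m (cvec (\<mu> + \<rho>)) * cprod Rp m (cvec (- \<mu> - \<rho>)) / cprod Rp m (cvec (- \<rho>))"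
      unfolding cfun_def using Cnz P1 P2 P3 by (simp add: field_simps)
    also have "\<dots> = dpoly Rp m (cvec \<mu>)"
      unfolding C p1 p2 p3 dpoly_def cvec_add[symmetric] \<rho>_def[symmetric] cc_cvec r_def[symmetric] e2
      using alg[of Rp "\<lambda>a. m a div 2" "\<lambda>a. complex_of_real (r a)" "\<lambda>a. complex_of_real (u a + r a)"] nz4 nz1
      by simp
    finally have "plancherel Rp m \<mu> = cfun Rp m (cvec (- \<rho>)) /
            (cfun Rp m (cvec (\<mu> + \<rho>)) * cfun Rp m (cvec (- (\<mu> + \<rho>))))
        \<and> plancherel Rp m \<mu> = dpoly Rp m (cvec \<mu>)" using L by simp
  }
  note * = this
  show ?thesis unfolding \<rho>_def[symmetric]
  proof (intro conjI ballI)
    fix \<mu> assume h: "\<mu> \<in> Pplus Rp"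
    show "plancherel Rp m \<mu> = cfun Rp m (cvec (- \<rho>)) /
            (cfun Rp m (cvec (\<mu> + \<rho>)) * cfun Rp m (cvec (- (\<mu> + \<rho>))))"
      using *[OF h] by (rule conjunct1)
  next
    fix \<mu> assume h: "\<mu> \<in> Pplus Rp"
    show "plancherel Rp m \<mu> = dpoly Rp m (cvec \<mu>)"
      using *[OF h] by (rule conjunct2)
  qed
qed

end
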